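(* Let $g\ge0$, $n\ge1$. Let $[Ch_1]$ and $[Ch_2]$ be two chambers up to symmetry, and let $\mathcal{A}\in Ch_1\in[Ch_1]$, $\mathcal{B}\in Ch_2\in[Ch_2]$ be weight data. If $[Ch_1]\le[Ch_2]$, there is an inclusion as a full subcategory $\mathcal{G}_{g,\mathcal{A}}\hookrightarrow\mathcal{G}_{g,\mathcal{B}}$; it is an isomorphism of categories if $[Ch_1]=[Ch_2]$.
   Context: A weight datum is $\mathcal{A}=(a_1,\dots,a_n)$ with $a_i\in\mathbb{Q}\cap(0,1]$ and $2g-2+\sum_i a_i>0$; $\mathcal{D}_{g,n}\subset\mathbb{R}^n$ is the set of weight data. For $S\subseteq\{1,\dots,n\}$ with $2\le|S|\le n$ if $g\ge1$ (resp. $2\le|S|\le n-2$ if $g=0$), the wall $w_S$ is the locus $\sum_{i\in S}a_i=1$. The chambers are the connected components of the complement in $\mathcal{D}_{g,n}$ of all walls; each is determined by the direction ($<1$ or $>1$) of $\sum_{i\in S}a_i$ for each such $S$. The set $\mathbf{K}$ of chambers is partially ordered by $Ch_1\le Ch_2$ iff for every such $S$, $\sum_{i\in S}a_i>1$ on $Ch_1$ implies $\sum_{i\in S}b_i>1$ on $Ch_2$. $S_n$ acts on $\mathcal{D}_{g,n}$ by permuting coordinates and hence on $\mathbf{K}$; a chamber up to symmetry $[Ch]$ is the $S_n$-orbit of $Ch$, and $[Ch_1]\le[Ch_2]$ iff there are $Ch_1'\in[Ch_1]$, $Ch_2'\in[Ch_2]$ with $Ch_1'\le Ch_2'$. A $(g,\mathcal{A})$-stable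 graph is a finite connected graph $G$ (loops and multiple edges allowed) with vertex weight $w:V(G)\to\mathbb{Z}_{\ge0}$ and $n$ legs labelled $1,\dots,n$ attached via $m:\{1,\dots,n\}\to V(G)$, with $b_1(G)+\sum_v w(v)=g$ and $2w(v)-2+|v|_E+|v|_{\mathcal{A}}>0$ for every vertex $v$, where $|v|_E$ is the number of edge half-edges at $v$ (loops counted twice) and $|v|_{\mathcal{A}}=\sum_{m(i)=v}a_i$. $\mathcal{G}_{g,\mathcal{A}}$ is the category whose objects are $(g,\mathcal{A})$-stable graphs and whose morphisms are compositions of isomorphisms of weighted marked graphs and weighted edge contractions. *)

theory Defs
  imports "HOL-Analysis.Analysis"
begin

text \<open>Legs are indexed by a finite type 'n (n = CARD('n) >= 1); a weight datum is
  a vector in real^'n.\<close>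

definition wsum :: "'n set \<Rightarrow> real^('n::finite) \<Rightarrow> real" where
  "wsum S a = (\<Sum>i\<in>S. a $ i)"

definition weight_datum :: "nat \<Rightarrow> real^('n::finite) \<Rightarrow> bool" where
  "weight_datum g a \<longleftrightarrow>
     (\<forall>i. a $ i \<in> \<rat> \<and> 0 < a $ i \<and> a $ i \<le> 1) \<and>
     2 * real g - 2 + (\<Sum>i\<in>UNIV. a $ i) > 0"

definition is_wall :: "nat \<Rightarrow> ('n::finite) set \<Rightarrow> bool" where
  "is_wall g S \<longleftrightarrow> 2 \<le> card S \<and>
     (if g \<ge> 1 then card S \<le> CARD('n) else card S + 2 \<le> CARD('n))"

definition off_walls :: "nat \<Rightarrow> real^('n::finite) \<Rightarrow> bool" where
  "off_walls g a \<longleftrightarrow> (\<forall>S. is_wall g S \<longrightarrow> wsum S a \<noteq> 1)"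

definition chamber :: "nat \<Rightarrow> real^('n::finite) \<Rightarrow> (real^'n) set" where
  "chamber g a = {b. weight_datum g b \<and> off_walls g b \<and>
      (\<forall>S::'n set. is_wall g S \<longrightarrow> (wsum S b > 1 \<longleftrightarrow> wsum S a > 1))}"

definition chambers :: "nat \<Rightarrow> (real^('n::finite)) set set" where
  "chambers g = {chamber g a | a. weight_datum g a \<and> off_walls g a}"

definition chamber_le :: "nat \<Rightarrow> (real^('n::finite)) set \<Rightarrow> (real^'n) set \<Rightarrow> bool" where
  "chamber_le g C1 C2 \<longleftrightarrow>
     (\<forall>S::'n set. is_wall g S \<longrightarrow>
        (\<forall>a\<in>C1. wsum S a > 1) \<longrightarrow> (\<forall>b\<in>C2. wsum S b > 1))"

definition perm_act :: "('n::finite \<Rightarrow> 'n) \<Rightarrow> real^'n \<Rightarrow> real^'n" where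
  "perm_act \<sigma> a = (\<chi> i. a $ (inv \<sigma> i))"

definition sym_class :: "(real^('n::finite)) set \<Rightarrow> (real^'n) set set" where
  "sym_class C = {perm_act \<sigma> ` C | \<sigma>. \<sigma> permutes (UNIV :: 'n set)}"

definition class_le :: "nat \<Rightarrow> (real^('n::finite)) set set \<Rightarrow> (real^'n) set set \<Rightarrow> bool" where
  "class_le g P Q \<longleftrightarrow> (\<exists>C1\<in>P. \<exists>C2\<in>Q. chamber_le g C1 C2)"

text \<open>Vertices and half-edges are natural numbers; opp is the fixed-point-free
  involution pairing half-edges into edges (a loop is a pair of half-edges at the same
  vertex); att attaches half-edges to vertices; wt is the vertex weight; leg i is the
  vertex carrying leg i.  Data outside the carriers is normalised to undefined.\<close>

record 'n sgraph =
  verts :: "nat set"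
  hes   :: "nat set"
  att   :: "nat \<Rightarrow> nat"
  opp   :: "nat \<Rightarrow> nat"
  wt    :: "nat \<Rightarrow> nat"
  leg   :: "'n \<Rightarrow> nat"

definition adj :: "'n sgraph \<Rightarrow> (nat \<times> nat) set" where
  "adj G = {(att G h, att G (opp G h)) | h. h \<in> hes G}"

definition wf_graph :: "'n sgraph \<Rightarrow> bool" where
  "wf_graph G \<longleftrightarrow>
     finite (verts G) \<and> verts G \<noteq> {} \<and> finite (hes G) \<and>
     att G \<in> hes G \<rightarrow> verts G \<and> opp G \<in> hes G \<rightarrow> hes G \<and>
     (\<forall>h\<in>hes G. opp G (opp G h) = h \<and> opp G h \<noteq> h) \<and>
     (\<forall>i. leg G i \<in> verts G) \<and>
     att G \<in> extensional (hes G) \<and> opp G \<in> extensional (hes G) \<and>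
     wt G \<in> extensional (verts G) \<and>
     (\<forall>u\<in>verts G. \<forall>v\<in>verts G. (u, v) \<in> (adj G)\<^sup>*)"

definition first_betti :: "'n sgraph \<Rightarrow> int" where
  "first_betti G = int (card (hes G) div 2) - int (card (verts G)) + 1"

definition edge_valence :: "'n sgraph \<Rightarrow> nat \<Rightarrow> nat" where
  "edge_valence G v = card {h \<in> hes G. att G h = v}"

definition leg_weight :: "real^('n::finite) \<Rightarrow> 'n sgraph \<Rightarrow> nat \<Rightarrow> real" where
  "leg_weight a G v = (\<Sum>i\<in>{i. leg G i = v}. a $ i)"

definition stable_graph :: "nat \<Rightarrow> real^('n::finite) \<Rightarrow> 'n sgraph \<Rightarrow> bool" where
  "stable_graph g a G \<longleftrightarrow> wf_graph G \<and>
     first_betti G + (\<Sum>v\<in>verts G. int (wt G v)) = int g \<and>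
     (\<forall>v\<in>verts G. 2 * real (wt G v) - 2 + real (edge_valence G v) + leg_weight a G v > 0)"

text \<open>A morphism f : G \<rightarrow> G' consists of a vertex map G \<rightarrow> G' and the map sending
  each half-edge of G' to the half-edge of G it comes from.\<close>

record 'n gmor =
  src  :: "'n sgraph"
  tgt  :: "'n sgraph"
  vmap :: "nat \<Rightarrow> nat"
  hmap :: "nat \<Rightarrow> nat"

definition graph_map :: "'n gmor \<Rightarrow> bool" where
  "graph_map f \<longleftrightarrow>
     (let G = src f; G' = tgt f in
       vmap f \<in> verts G \<rightarrow> verts G' \<and> vmap f ` verts G = verts G' \<and>
       hmap f \<in> hes G' \<rightarrow> hes G \<and> inj_on (hmap f) (hes G') \<and>
       vmap f \<in> extensional (verts G) \<and> hmap f \<in> extensional (hes G') \<and>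
       (\<forall>h\<in>hes G'. hmap f (opp G' h) = opp G (hmap f h)) \<and>
       (\<forall>h\<in>hes G'. vmap f (att G (hmap f h)) = att G' h) \<and>
       (\<forall>i. vmap f (leg G i) = leg G' i))"

definition is_graph_iso :: "'n gmor \<Rightarrow> bool" where
  "is_graph_iso f \<longleftrightarrow> graph_map f \<and>
     hmap f ` hes (tgt f) = hes (src f) \<and>
     inj_on (vmap f) (verts (src f)) \<and>
     (\<forall>v\<in>verts (src f). wt (tgt f) (vmap f v) = wt (src f) v)"

definition is_edge_contraction :: "'n gmor \<Rightarrow> bool" where
  "is_edge_contraction f \<longleftrightarrow> graph_map f \<and>
     (let G = src f; G' = tgt f in
       (\<exists>h\<in>hes G.
          hes G - hmap f ` hes G' = {h, opp G h} \<and>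
          (\<forall>x\<in>verts G. \<forall>y\<in>verts G.
              vmap f x = vmap f y \<longleftrightarrow> x = y \<or> {x, y} = {att G h, att G (opp G h)}) \<and>
          (\<forall>v'\<in>verts G'. wt G' v' =
              (\<Sum>v\<in>{v\<in>verts G. vmap f v = v'}. wt G v) +
              (if att G h = att G (opp G h) \<and> vmap f (att G h) = v' then 1 else 0))))"

definition gcomp :: "'n gmor \<Rightarrow> 'n gmor \<Rightarrow> 'n gmor" where
  "gcomp k f = \<lparr> src = src f, tgt = tgt k,
      vmap = restrict (vmap k \<circ> vmap f) (verts (src f)),
      hmap = restrict (hmap f \<circ> hmap k) (hes (tgt k)) \<rparr>"

definition gid :: "'n sgraph \<Rightarrow> 'n gmor" where
  "gid G = \<lparr> src = G, tgt = G, vmap = restrict id (verts G), hmap = restrict id (hes G) \<rparr>"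

definition obj :: "nat \<Rightarrow> real^('n::finite) \<Rightarrow> 'n sgraph set" where
  "obj g a = {G. stable_graph g a G}"

inductive_set mor :: "nat \<Rightarrow> real^('n::finite) \<Rightarrow> 'n gmor set" for g a where
  iso: "is_graph_iso f \<Longrightarrow> src f \<in> obj g a \<Longrightarrow> tgt f \<in> obj g a \<Longrightarrow> f \<in> mor g a"
| contr: "is_edge_contraction f \<Longrightarrow> src f \<in> obj g a \<Longrightarrow> tgt f \<in> obj g a \<Longrightarrow> f \<in> mor g a"
| comp: "f \<in> mor g a \<Longrightarrow> k \<in> mor g a \<Longrightarrow> tgt f = src k \<Longrightarrow> gcomp k f \<in> mor g a"

definition Hom :: "nat \<Rightarrow> real^('n::finite) \<Rightarrow> 'n sgraph \<Rightarrow> 'n sgraph \<Rightarrow> 'n gmor set" where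
  "Hom g a X Y = {f \<in> mor g a. src f = X \<and> tgt f = Y}"

definition is_functor ::
  "nat \<Rightarrow> real^('n::finite) \<Rightarrow> real^'n \<Rightarrow> ('n sgraph \<Rightarrow> 'n sgraph) \<Rightarrow> ('n gmor \<Rightarrow> 'n gmor) \<Rightarrow> bool" where
  "is_functor g a b Fo Fm \<longleftrightarrow>
     (\<forall>X\<in>obj g a. Fo X \<in> obj g b) \<and>
     (\<forall>f\<in>mor g a. Fm f \<in> Hom g b (Fo (src f)) (Fo (tgt f))) \<and>
     (\<forall>X\<in>obj g a. Fm (gid X) = gid (Fo X)) \<and>
     (\<forall>f\<in>mor g a. \<forall>k\<in>mor g a. tgt f = src k \<longrightarrow> Fm (gcomp k f) = gcomp (Fm k) (Fm f))"

definition full_embedding ::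
  "nat \<Rightarrow> real^('n::finite) \<Rightarrow> real^'n \<Rightarrow> ('n sgraph \<Rightarrow> 'n sgraph) \<Rightarrow> ('n gmor \<Rightarrow> 'n gmor) \<Rightarrow> bool" where
  "full_embedding g a b Fo Fm \<longleftrightarrow> is_functor g a b Fo Fm \<and>
     inj_on Fo (obj g a) \<and>
     (\<forall>X\<in>obj g a. \<forall>Y\<in>obj g a. bij_betw Fm (Hom g a X Y) (Hom g b (Fo X) (Fo Y)))"

definition cat_isomorphism ::
  "nat \<Rightarrow> real^('n::finite) \<Rightarrow> real^'n \<Rightarrow> ('n sgraph \<Rightarrow> 'n sgraph) \<Rightarrow> ('n gmor \<Rightarrow> 'n gmor) \<Rightarrow> bool" where
  "cat_isomorphism g a b Fo Fm \<longleftrightarrow> full_embedding g a b Fo Fm \<and> bij_betw Fo (obj g a) (obj g b)"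

end

theory Submission
  imports Defs
begin


lemma lw_nonneg:
  assumes "weight_datum g a" shows "leg_weight a G v \<ge> 0"
  using assms unfolding leg_weight_def weight_datum_def
  by (intro sum_nonneg) (auto intro: less_imp_le)

lemma lw_pos:
  assumes "weight_datum g a" and "leg G i = v" shows "leg_weight a G v > 0"
proof -
  have "leg_weight a G v \<ge> a $ i" unfolding leg_weight_def
    using assms by (intro member_le_sum) (auto simp: weight_datum_def less_imp_le)
  moreover have "a $ i > 0" using assms by (auto simp: weight_datum_def)
  ultimately show ?thesis by simp
qed

lemma lw_zero: "\<not> (\<exists>i. leg G i = v) \<Longrightarrow> leg_weight a G v = 0"
  unfolding leg_weight_def by auto

lemma isolated_vertex:
  assumes wf: "wf_graph G" and gen: "first_betti G + (\<Sum>v\<in>verts G. int (wt G v)) = int g"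
    and v: "v \<in> verts G" and val: "edge_valence G v = 0" and w: "wt G v = 0"
  shows "verts G = {v}" "hes G = {}" "g = 0"
proof -
  have noh: "\<forall>h\<in>hes G. att G h \<noteq> v"
  proof
    fix h assume "h \<in> hes G"
    have "finite {h \<in> hes G. att G h = v}" using wf by (auto simp: wf_graph_def)
    with val have "{h \<in> hes G. att G h = v} = {}" by (simp add: edge_valence_def)
    with \<open>h \<in> hes G\<close> show "att G h \<noteq> v" by auto
  qed
  show V: "verts G = {v}"
  proof (rule ccontr)
    assume "verts G \<noteq> {v}"
    then obtain u where u: "u \<in> verts G" "u \<noteq> v" using v by auto
    have "(v, u) \<in> (adj G)\<^sup>*" using wf u v by (auto simp: wf_graph_def)
    then show False
    proof (cases rule: converse_rtranclE)
      case base then show ?thesis using u by simp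
    next
      case (step z) then show ?thesis using noh by (auto simp: adj_def)
    qed
  qed
  show H: "hes G = {}"
  proof (rule ccontr)
    assume "hes G \<noteq> {}"
    then obtain h where "h \<in> hes G" by auto
    then have "att G h \<in> verts G" using wf by (auto simp: wf_graph_def)
    then show False using V noh \<open>h \<in> hes G\<close> by auto
  qed
  show "g = 0" using gen V H w by (simp add: first_betti_def)
qed

lemma stable_char:
  assumes wd: "weight_datum g a"
  shows "stable_graph g a G \<longleftrightarrow> wf_graph G \<and>
     first_betti G + (\<Sum>v\<in>verts G. int (wt G v)) = int g \<and>
     (\<forall>v\<in>verts G. (wt G v = 0 \<and> edge_valence G v = 1 \<longrightarrow> leg_weight a G v > 1) \<and>
        (2 * wt G v + edge_valence G v = 2 \<longrightarrow> (\<exists>i. leg G i = v)))"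
proof -
  have vx: "(2 * real (wt G v) - 2 + real (edge_valence G v) + leg_weight a G v > 0) \<longleftrightarrow>
      ((wt G v = 0 \<and> edge_valence G v = 1 \<longrightarrow> leg_weight a G v > 1) \<and>
        (2 * wt G v + edge_valence G v = 2 \<longrightarrow> (\<exists>i. leg G i = v)))"
    if wf: "wf_graph G" and gen: "first_betti G + (\<Sum>v\<in>verts G. int (wt G v)) = int g"
      and v: "v \<in> verts G" for v
  proof -
    have nn: "leg_weight a G v \<ge> 0" by (rule lw_nonneg[OF wd])
    have pe: "leg_weight a G v > 0 \<longleftrightarrow> (\<exists>i. leg G i = v)"
      using lw_pos[OF wd] lw_zero by (metis less_irrefl)
    consider "2 * wt G v + edge_valence G v \<ge> 3" | "2 * wt G v + edge_valence G v = 2"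
      | "wt G v = 0 \<and> edge_valence G v = 1" | "wt G v = 0 \<and> edge_valence G v = 0" by linarith
    then show ?thesis
    proof cases
      case 1
      then have "2 * real (wt G v) + real (edge_valence G v) \<ge> 3" by linarith
      then show ?thesis using nn 1 by auto
    next
      case 2
      then have "2 * real (wt G v) + real (edge_valence G v) = 2" by linarith
      then show ?thesis using pe 2 by auto
    next
      case 3 then show ?thesis by auto
    next
      case 4
      note iso = isolated_vertex[OF wf gen v] 
      have g0: "g = 0" using iso 4 by auto
      have "leg_weight a G v = (\<Sum>i\<in>UNIV. a $ i)"
        using wf iso(1) 4 unfolding leg_weight_def wf_graph_def by auto
      moreover have "(\<Sum>i\<in>UNIV. a $ i) > 2" using wd g0 by (auto simp: weight_datum_def)
      ultimately show ?thesis using 4 by auto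
    qed
  qed
  show ?thesis unfolding stable_graph_def using vx by blast
qed



definition big :: "nat \<Rightarrow> real^('n::finite) \<Rightarrow> 'n set set" where
  "big g x = {S. is_wall g S \<and> wsum S x > 1}"

lemma stable_mono:
  fixes x y :: "real^('n::finite)"
  assumes wx: "weight_datum g x" and wy: "weight_datum g y" and sub: "big g x \<subseteq> big g y"
    and st: "stable_graph g x G"
  shows "stable_graph g y G"
proof -
  have key: "leg_weight y G v > 1" if lx: "leg_weight x G v > 1" for v
  proof -
    define S where "S = {i. leg G i = v}"
    have lwS: "leg_weight z G v = wsum S z" for z unfolding S_def leg_weight_def wsum_def by simp
    have "wsum S x \<le> of_nat (card S) * 1" unfolding wsum_def
      using wx by (intro sum_bounded_above) (auto simp: weight_datum_def)
    with lx lwS have "real (card S) > 1" by simp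
    then have c2: "card S \<ge> 2" by simp
    show ?thesis
    proof (cases "is_wall g S")
      case True
      then have "S \<in> big g x" using lx lwS by (simp add: big_def)
      then show ?thesis using sub lwS by (auto simp: big_def)
    next
      case False
      have cS: "card S \<le> CARD('n)" by (rule card_mono) auto
      with False c2 have g0: "g = 0" and cc: "card S + 2 > CARD('n)"
        by (auto simp: is_wall_def split: if_splits)
      have cm: "card (UNIV - S) \<le> 1" using cc cS by (simp add: card_Diff_subset)
      have "(\<Sum>i\<in>UNIV - S. y $ i) \<le> of_nat (card (UNIV - S)) * 1"
        using wy by (intro sum_bounded_above) (auto simp: weight_datum_def)
      also have "\<dots> \<le> 1" using cm by simp
      finally have m1: "(\<Sum>i\<in>UNIV - S. y $ i) \<le> 1" .
      have tot: "(\<Sum>i\<in>UNIV. y $ i) > 2" using wy g0 by (auto simp: weight_datum_def)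
      have "(\<Sum>i\<in>UNIV. y $ i) = wsum S y + (\<Sum>i\<in>UNIV - S. y $ i)"
        unfolding wsum_def by (metis add.commute finite sum.subset_diff top_greatest)
      then show ?thesis using m1 tot lwS by simp
    qed
  qed
  show ?thesis using st key unfolding stable_char[OF wx] stable_char[OF wy] by blast
qed

definition relab :: "('n \<Rightarrow> 'n) \<Rightarrow> 'n sgraph \<Rightarrow> 'n sgraph" where
  "relab p G = G\<lparr>leg := leg G \<circ> p\<rparr>"

definition relabm :: "('n \<Rightarrow> 'n) \<Rightarrow> 'n gmor \<Rightarrow> 'n gmor" where
  "relabm p f = f\<lparr>src := relab p (src f), tgt := relab p (tgt f)\<rparr>"

lemma relab_simps[simp]:
  "verts (relab p G) = verts G" "hes (relab p G) = hes G" "att (relab p G) = att G"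
  "opp (relab p G) = opp G" "wt (relab p G) = wt G" "leg (relab p G) = leg G \<circ> p"
  "src (relabm p f) = relab p (src f)" "tgt (relabm p f) = relab p (tgt f)"
  "vmap (relabm p f) = vmap f" "hmap (relabm p f) = hmap f"
  by (simp_all add: relab_def relabm_def)

lemma adj_relab[simp]: "adj (relab p G) = adj G" by (simp add: adj_def)
lemma betti_relab[simp]: "first_betti (relab p G) = first_betti G" by (simp add: first_betti_def)
lemma val_relab[simp]: "edge_valence (relab p G) v = edge_valence G v" by (simp add: edge_valence_def)

lemma relab_relab: "relab p (relab q G) = relab (q \<circ> p) G"
  by (simp add: relab_def o_assoc)
lemma relab_id: "(\<forall>x. p x = x) \<Longrightarrow> relab p G = G"
  by (simp add: relab_def o_def)

lemma relabm_relabm: "relabm p (relabm q f) = relabm (q \<circ> p) f"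
  by (simp add: relabm_def relab_relab)
lemma relabm_id: "(\<forall>x. p x = x) \<Longrightarrow> relabm p f = f"
  by (simp add: relabm_def relab_id)

lemma all_surj: "surj p \<Longrightarrow> (\<forall>i. P (p i)) \<longleftrightarrow> (\<forall>i. P i)"
  by (metis surjD)

lemma wf_relab: "surj p \<Longrightarrow> wf_graph (relab p G) \<longleftrightarrow> wf_graph G"
  unfolding wf_graph_def relab_simps adj_relab o_def
  using all_surj[of p "\<lambda>i. leg G i \<in> verts G"] by simp

lemma graph_map_relab: "surj p \<Longrightarrow> graph_map (relabm p f) \<longleftrightarrow> graph_map f"
  unfolding graph_map_def Let_def relab_simps o_def
  using all_surj[of p "\<lambda>i. vmap f (leg (src f) i) = leg (tgt f) i"] by simp

lemma iso_relab: "surj p \<Longrightarrow> is_graph_iso (relabm p f) \<longleftrightarrow> is_graph_iso f"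
  unfolding is_graph_iso_def by (simp add: graph_map_relab)

lemma contr_relab: "surj p \<Longrightarrow> is_edge_contraction (relabm p f) \<longleftrightarrow> is_edge_contraction f"
  unfolding is_edge_contraction_def Let_def relab_simps by (simp only: graph_map_relab)

lemma gcomp_relab: "gcomp (relabm p k) (relabm p f) = relabm p (gcomp k f)"
  by (simp add: gcomp_def relabm_def relab_def)

lemma gid_relab: "relabm p (gid X) = gid (relab p X)"
  by (simp add: gid_def relabm_def relab_def)

lemma lw_relab:
  assumes p: "p permutes (UNIV::'n::finite set)"
  shows "leg_weight (perm_act p a) (relab (inv p) G) v = leg_weight a G v"
proof -
  have e: "{j. leg G (inv p j) = v} = p ` {i. leg G i = v}"
    using p by (auto simp: permutes_inverses image_iff intro!: exI[of _ "inv p _"])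
  have "leg_weight (perm_act p a) (relab (inv p) G) v = (\<Sum>j\<in>p ` {i. leg G i = v}. a $ inv p j)"
    unfolding leg_weight_def perm_act_def using e by simp
  also have "\<dots> = (\<Sum>i\<in>{i. leg G i = v}. a $ inv p (p i))"
    by (subst sum.reindex) (auto intro: inj_on_subset permutes_inj[OF p])
  also have "\<dots> = leg_weight a G v" unfolding leg_weight_def using p by (simp add: permutes_inverses)
  finally show ?thesis .
qed

lemma wd_perm:
  assumes p: "p permutes (UNIV::'n::finite set)" and wd: "weight_datum g a"
  shows "weight_datum g (perm_act p a)"
proof -
  have "(\<Sum>i\<in>UNIV. perm_act p a $ i) = (\<Sum>i\<in>UNIV. a $ i)"
    unfolding perm_act_def using sum.permute[OF permutes_inv[OF p], of "\<lambda>i. a $ i"] by (simp add: o_def)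
  then show ?thesis using wd unfolding weight_datum_def perm_act_def by simp
qed

lemma stable_relab:
  assumes p: "p permutes (UNIV::'n::finite set)"
  shows "stable_graph g (perm_act p a) (relab (inv p) G) \<longleftrightarrow> stable_graph g a G"
proof -
  have "surj (inv p)" using permutes_surj[OF permutes_inv[OF p]] .
  then show ?thesis unfolding stable_graph_def by (simp add: wf_relab lw_relab[OF p])
qed



lemma val_image:
  assumes gm: "graph_map f" and v: "v' \<in> verts (tgt f)"
  shows "edge_valence (tgt f) v' = card {k \<in> hmap f ` hes (tgt f). vmap f (att (src f) k) = v'}"
proof -
  let ?E = "{h' \<in> hes (tgt f). att (tgt f) h' = v'}"
  have inj: "inj_on (hmap f) ?E" using gm unfolding graph_map_def Let_def
    by (auto intro: inj_on_subset)
  have "hmap f ` ?E = {k \<in> hmap f ` hes (tgt f). vmap f (att (src f) k) = v'}"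
    using gm unfolding graph_map_def Let_def by auto
  then show ?thesis unfolding edge_valence_def using card_image[OF inj] by simp
qed

lemma card_ge2_other:
  assumes "finite E" "card E \<ge> 2" shows "\<exists>k\<in>E. k \<noteq> h"
proof (rule ccontr)
  assume "\<not> ?thesis"
  then have "E \<subseteq> {h}" by auto
  then have "card E \<le> card {h}" by (intro card_mono) auto
  then have "card E \<le> 1" by simp
  with assms show False by simp
qed

lemma preimage_ok:
  assumes step: "is_graph_iso f \<or> is_edge_contraction f"
    and wfG: "wf_graph (src f)" and wfH: "wf_graph (tgt f)"
    and v: "v' \<in> verts (tgt f)" and w0: "wt (tgt f) v' = 0" and e1: "edge_valence (tgt f) v' = 1"
  shows "\<exists>x\<in>verts (src f). vmap f x = v' \<and> wt (src f) x = 0 \<and> edge_valence (src f) x = 1"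
proof -
  let ?G = "src f" and ?H = "tgt f"
  have gm: "graph_map f" using step by (auto simp: is_graph_iso_def is_edge_contraction_def)
  have vm: "vmap f \<in> verts ?G \<rightarrow> verts ?H" "vmap f ` verts ?G = verts ?H"
    and hm: "hmap f \<in> hes ?H \<rightarrow> hes ?G"
    using gm unfolding graph_map_def Let_def by auto
  obtain x where x: "x \<in> verts ?G" "vmap f x = v'" using vm(2) v by (metis imageE)
  have finG: "finite (hes ?G)" "finite (verts ?G)" and attG: "att ?G \<in> hes ?G \<rightarrow> verts ?G"
    and oppG: "opp ?G \<in> hes ?G \<rightarrow> hes ?G"
    using wfG by (auto simp: wf_graph_def)
  have valH: "edge_valence ?H v' = card {k \<in> hmap f ` hes ?H. vmap f (att ?G k) = v'}"
    by (rule val_image[OF gm v])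
  show ?thesis
  proof (cases "is_graph_iso f")
    case True
    then have img: "hmap f ` hes ?H = hes ?G" and inj: "inj_on (vmap f) (verts ?G)"
      and wtt: "wt ?H (vmap f x) = wt ?G x"
      using x by (auto simp: is_graph_iso_def)
    have "{k \<in> hmap f ` hes ?H. vmap f (att ?G k) = v'} = {k \<in> hes ?G. att ?G k = x}"
      using img inj x attG by (auto simp: inj_on_def)
    then have "edge_valence ?G x = 1" using valH e1 by (simp add: edge_valence_def)
    then show ?thesis using x wtt w0 by auto
  next
    case False
    with step have ec: "is_edge_contraction f" by simp
    then obtain h where h: "h \<in> hes ?G" and dif: "hes ?G - hmap f ` hes ?H = {h, opp ?G h}"
      and iff: "\<forall>x\<in>verts ?G. \<forall>y\<in>verts ?G.
              vmap f x = vmap f y \<longleftrightarrow> x = y \<or> {x, y} = {att ?G h, att ?G (opp ?G h)}"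
      and wtf: "\<forall>v'\<in>verts ?H. wt ?H v' =
              (\<Sum>v\<in>{v\<in>verts ?G. vmap f v = v'}. wt ?G v) +
              (if att ?G h = att ?G (opp ?G h) \<and> vmap f (att ?G h) = v' then 1 else 0)"
      unfolding is_edge_contraction_def Let_def by blast
    define x0 where "x0 = att ?G h"
    define y0 where "y0 = att ?G (opp ?G h)"
    have oh: "opp ?G h \<in> hes ?G" using h oppG by auto
    have x0: "x0 \<in> verts ?G" and y0: "y0 \<in> verts ?G" using h oh attG x0_def y0_def by auto
    have img: "hmap f ` hes ?H = hes ?G - {h, opp ?G h}" using dif hm by auto
    have wv: "wt ?H v' = (\<Sum>v\<in>{v\<in>verts ?G. vmap f v = v'}. wt ?G v) +
              (if x0 = y0 \<and> vmap f x0 = v' then 1 else 0)"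
      using wtf v x0_def y0_def by simp
    show ?thesis
    proof (cases "x = x0 \<or> x = y0")
      case False
      have pre: "{v\<in>verts ?G. vmap f v = v'} = {x}"
        using iff x x0_def y0_def False by auto
      have nx0: "vmap f x0 \<noteq> v'" using iff x x0 False x0_def y0_def by auto
      have wx: "wt ?G x = 0" using wv pre nx0 w0 by simp
      have "{k \<in> hmap f ` hes ?H. vmap f (att ?G k) = v'} = {k \<in> hes ?G. att ?G k = x}"
      proof
        show "{k \<in> hmap f ` hes ?H. vmap f (att ?G k) = v'} \<subseteq> {k \<in> hes ?G. att ?G k = x}"
          using img iff x attG False x0_def y0_def by auto
        show "{k \<in> hes ?G. att ?G k = x} \<subseteq> {k \<in> hmap f ` hes ?H. vmap f (att ?G k) = v'}"
          using img x False x0_def y0_def by auto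
      qed
      then have "edge_valence ?G x = 1" using valH e1 by (simp add: edge_valence_def)
      then show ?thesis using x wx by auto
    next
      case True
      have vx0: "vmap f x0 = v'" and vy0: "vmap f y0 = v'"
        using True iff x x0 y0 x0_def y0_def by auto
      have ne: "x0 \<noteq> y0" using wv vx0 w0 by auto
      have "(\<Sum>v\<in>{v\<in>verts ?G. vmap f v = v'}. wt ?G v) = 0" using wv w0 by simp
      then have wz: "\<forall>v\<in>{v\<in>verts ?G. vmap f v = v'}. wt ?G v = 0"
        using finG by simp
      have wx0: "wt ?G x0 = 0" and wy0: "wt ?G y0 = 0" using wz x0 y0 vx0 vy0 by auto
      let ?T = "{k \<in> hmap f ` hes ?H. vmap f (att ?G k) = v'}"
      have finT: "finite ?T" using wfH by (auto simp: wf_graph_def)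
      have cT: "card ?T = 1" using valH e1 by simp
      have fE: "finite {k \<in> hes ?G. att ?G k = z}" for z using finG by simp
      have h1: "edge_valence ?G x0 \<ge> 1" unfolding edge_valence_def
        using h x0_def fE by (metis (mono_tags, lifting) One_nat_def Suc_leI card_gt_0_iff empty_iff mem_Collect_eq)
      have h2: "edge_valence ?G y0 \<ge> 1" unfolding edge_valence_def
        using oh y0_def fE by (metis (mono_tags, lifting) One_nat_def Suc_leI card_gt_0_iff empty_iff mem_Collect_eq)
      have "edge_valence ?G x0 \<le> 1 \<or> edge_valence ?G y0 \<le> 1"
      proof (rule ccontr)
        assume "\<not> ?thesis"
        then have "edge_valence ?G x0 \<ge> 2" "edge_valence ?G y0 \<ge> 2" by auto
        then obtain k1 k2 where k1: "k1 \<in> hes ?G" "att ?G k1 = x0" "k1 \<noteq> h"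
          and k2: "k2 \<in> hes ?G" "att ?G k2 = y0" "k2 \<noteq> opp ?G h"
          unfolding edge_valence_def using card_ge2_other[OF fE] by blast
        have "k1 \<in> ?T" using k1 img vx0 ne y0_def by auto
        moreover have "k2 \<in> ?T" using k2 img vy0 ne x0_def by auto
        moreover have "k1 \<noteq> k2" using k1 k2 ne by auto
        ultimately have "card {k1, k2} \<le> card ?T" by (intro card_mono[OF finT]) auto
        then show False using cT \<open>k1 \<noteq> k2\<close> by simp
      qed
      then show ?thesis using h1 h2 x0 y0 vx0 vy0 wx0 wy0 by (metis le_antisym)
    qed
  qed
qed

lemma step_transfer:
  fixes c b :: "real^('n::finite)" and f :: "'n gmor"
  assumes wc: "weight_datum g c" and wb: "weight_datum g b"
    and step: "is_graph_iso f \<or> is_edge_contraction f"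
    and sc: "stable_graph g c (src f)" and sb: "stable_graph g b (tgt f)"
  shows "stable_graph g c (tgt f)"
proof -
  have gm: "graph_map f" using step by (auto simp: is_graph_iso_def is_edge_contraction_def)
  have legH: "leg (tgt f) i = vmap f (leg (src f) i)" for i
    using gm by (simp add: graph_map_def Let_def)
  have wfG: "wf_graph (src f)" and wfH: "wf_graph (tgt f)"
    using sc sb by (auto simp: stable_graph_def)
  have key: "leg_weight c (tgt f) v' > 1"
    if v: "v' \<in> verts (tgt f)" and w0: "wt (tgt f) v' = 0" and e1: "edge_valence (tgt f) v' = 1" for v'
  proof -
    obtain x where x: "x \<in> verts (src f)" "vmap f x = v'" "wt (src f) x = 0" "edge_valence (src f) x = 1"
      using preimage_ok[OF step wfG wfH v w0 e1] by blast
    have "leg_weight c (src f) x > 1" using sc x unfolding stable_char[OF wc] by blast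
    also have "leg_weight c (src f) x \<le> leg_weight c (tgt f) v'"
      unfolding leg_weight_def using wc x(2) legH
      by (intro sum_mono2) (auto simp: weight_datum_def less_imp_le)
    finally show ?thesis .
  qed
  show ?thesis using sb key unfolding stable_char[OF wc] stable_char[OF wb] by blast
qed



lemma mor_objs: "f \<in> mor g a \<Longrightarrow> src f \<in> obj g a \<and> tgt f \<in> obj g a"
  by (induction rule: mor.induct) (auto simp: gcomp_def)

lemma generic_embedding:
  fixes A B c :: "real^('n::finite)" and q q' :: "'n \<Rightarrow> 'n"
  assumes wdA: "weight_datum g A" and wdB: "weight_datum g B" and wdc: "weight_datum g c"
    and Rq: "\<And>G. stable_graph g c (relab q G) \<longleftrightarrow> stable_graph g A G"
    and qq': "\<And>x. q (q' x) = x" and q'q: "\<And>x. q' (q x) = x"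
    and mono: "big g c \<subseteq> big g B"
  shows "full_embedding g A B (relab q) (relabm q) \<and>
         (big g B \<subseteq> big g c \<longrightarrow> cat_isomorphism g A B (relab q) (relabm q))"
proof -
  have sq: "surj q" using qq' by (metis surjI)
  have sq': "surj q'" using q'q by (metis surjI)
  have rr1: "relab q' (relab q G) = G" for G using qq' by (simp add: relab_relab relab_id)
  have rr2: "relab q (relab q' G) = G" for G using q'q by (simp add: relab_relab relab_id)
  have mm1: "relabm q' (relabm q f) = f" for f using qq' by (simp add: relabm_relabm relabm_id)
  have mm2: "relabm q (relabm q' f) = f" for f using q'q by (simp add: relabm_relabm relabm_id)
  have Rq': "stable_graph g c G \<longleftrightarrow> stable_graph g A (relab q' G)" for G
    using Rq[of "relab q' G"] rr2 by simp
  have objAB: "relab q X \<in> obj g B" if "X \<in> obj g A" for X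
    using that Rq stable_mono[OF wdc wdB mono] by (auto simp: obj_def)
  have M1: "relabm q f \<in> mor g B" if "f \<in> mor g A" for f
    using that
  proof (induction rule: mor.induct)
    case (iso f) then show ?case
      by (intro mor.iso) (auto simp: iso_relab[OF sq] objAB)
  next
    case (contr f) then show ?case
      by (intro mor.contr) (auto simp: contr_relab[OF sq] objAB)
  next
    case (comp f k) then show ?case
      by (metis gcomp_relab mor.comp relab_simps(7,8))
  qed
  have M2: "stable_graph g c (src f') \<longrightarrow> stable_graph g c (tgt f') \<and> relabm q' f' \<in> mor g A"
    if "f' \<in> mor g B" for f'
    using that
  proof (induction rule: mor.induct)
    case (iso f)
    show ?case
    proof
      assume sc: "stable_graph g c (src f)"
      have tc: "stable_graph g c (tgt f)"
        using step_transfer[OF wdc wdB _ sc] iso by (auto simp: obj_def)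
      show "stable_graph g c (tgt f) \<and> relabm q' f \<in> mor g A"
        using tc sc iso Rq' by (auto intro!: mor.iso simp: iso_relab[OF sq'] obj_def)
    qed
  next
    case (contr f)
    show ?case
    proof
      assume sc: "stable_graph g c (src f)"
      have tc: "stable_graph g c (tgt f)"
        using step_transfer[OF wdc wdB _ sc] contr by (auto simp: obj_def)
      show "stable_graph g c (tgt f) \<and> relabm q' f \<in> mor g A"
        using tc sc contr Rq' by (auto intro!: mor.contr simp: contr_relab[OF sq'] obj_def)
    qed
  next
    case (comp f k)
    show ?case
    proof
      assume sc: "stable_graph g c (src (gcomp k f))"
      then have s1: "stable_graph g c (src f)" by (simp add: gcomp_def)
      with comp have a1: "stable_graph g c (tgt f)" "relabm q' f \<in> mor g A" by auto
      with comp have a2: "stable_graph g c (tgt k)" "relabm q' k \<in> mor g A" by auto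
      have "gcomp (relabm q' k) (relabm q' f) \<in> mor g A"
        using a1 a2 comp by (intro mor.comp) auto
      then show "stable_graph g c (tgt (gcomp k f)) \<and> relabm q' (gcomp k f) \<in> mor g A"
        using a2 gcomp_relab[of q' k f] by (simp add: gcomp_def[of k f])
    qed
  qed
  have fnct: "is_functor g A B (relab q) (relabm q)"
    unfolding is_functor_def
  proof (intro conjI ballI impI)
    fix X assume "X \<in> obj g A" then show "relab q X \<in> obj g B" by (rule objAB)
  next
    fix f assume "f \<in> mor g A"
    then show "relabm q f \<in> Hom g B (relab q (src f)) (relab q (tgt f))"
      using M1 by (simp add: Hom_def)
  next
    fix X show "relabm q (gid X) = gid (relab q X)" by (rule gid_relab)
  next
    fix f k show "relabm q (gcomp k f) = gcomp (relabm q k) (relabm q f)" by (simp add: gcomp_relab)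
  qed
  have injo: "inj_on (relab q) (obj g A)" by (metis inj_onI rr1)
  have hom: "bij_betw (relabm q) (Hom g A X Y) (Hom g B (relab q X) (relab q Y))"
    if X: "X \<in> obj g A" and Y: "Y \<in> obj g A" for X Y
  proof (rule bij_betw_imageI)
    show "inj_on (relabm q) (Hom g A X Y)" by (metis inj_onI mm1)
    show "relabm q ` Hom g A X Y = Hom g B (relab q X) (relab q Y)"
    proof
      show "relabm q ` Hom g A X Y \<subseteq> Hom g B (relab q X) (relab q Y)"
        using M1 by (auto simp: Hom_def)
    next
      show "Hom g B (relab q X) (relab q Y) \<subseteq> relabm q ` Hom g A X Y"
      proof
        fix f' assume f': "f' \<in> Hom g B (relab q X) (relab q Y)"
        have "stable_graph g c (src f')" using f' X Rq by (auto simp: Hom_def obj_def)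
        then have "relabm q' f' \<in> mor g A" using M2 f' by (auto simp: Hom_def)
        moreover have "src (relabm q' f') = X" "tgt (relabm q' f') = Y" using f' rr1 by (auto simp: Hom_def)
        ultimately have "relabm q' f' \<in> Hom g A X Y" by (simp add: Hom_def)
        then show "f' \<in> relabm q ` Hom g A X Y" using mm2 by (metis image_eqI)
      qed
    qed
  qed
  have fe: "full_embedding g A B (relab q) (relabm q)"
    unfolding full_embedding_def using fnct injo hom by blast
  have ci: "cat_isomorphism g A B (relab q) (relabm q)" if rev: "big g B \<subseteq> big g c"
  proof -
    have "relab q ` obj g A = obj g B"
    proof
      show "relab q ` obj g A \<subseteq> obj g B" using objAB by auto
      show "obj g B \<subseteq> relab q ` obj g A"
      proof
        fix Y assume "Y \<in> obj g B"
        then have "stable_graph g c Y" using stable_mono[OF wdB wdc rev] by (simp add: obj_def)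
        then have "relab q' Y \<in> obj g A" using Rq' by (simp add: obj_def)
        then show "Y \<in> relab q ` obj g A" using rr2 by (metis image_eqI)
      qed
    qed
    then show ?thesis unfolding cat_isomorphism_def using fe injo by (simp add: bij_betw_def)
  qed
  show ?thesis using fe ci by blast
qed



lemma wsum_perm:
  assumes p: "p permutes (UNIV::'n::finite set)"
  shows "wsum S (perm_act p x) = wsum (inv p ` S) x"
proof -
  have "wsum (inv p ` S) x = (\<Sum>i\<in>S. x $ inv p i)" unfolding wsum_def
    by (subst sum.reindex) (auto intro: inj_on_subset permutes_inj[OF permutes_inv[OF p]])
  then show ?thesis by (simp add: wsum_def perm_act_def)
qed

lemma wall_image: fixes p :: "'n::finite \<Rightarrow> 'n" shows "inj p \<Longrightarrow> is_wall g (p ` S) \<longleftrightarrow> is_wall g S"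
  using card_image[OF inj_on_subset[of p UNIV S]] unfolding is_wall_def by simp

lemma big_perm:
  fixes x :: "real^('n::finite)"
  assumes p: "p permutes (UNIV::'n set)"
  shows "big g (perm_act p x) = (`) p ` big g x"
proof -
  have ip: "inj (inv p)" using permutes_inj[OF permutes_inv[OF p]] .
  have i: "inj p" using permutes_inj[OF p] .
  have e1: "inv p ` p ` T = T" for T using p by (simp add: image_comp permutes_inv_o)
  have e2: "p ` inv p ` S = S" for S using p by (simp add: image_comp permutes_inv_o)
  have mem: "S \<in> big g (perm_act p x) \<longleftrightarrow> inv p ` S \<in> big g x" for S
    unfolding big_def using wsum_perm[OF p] wall_image[OF ip] by simp
  show ?thesis
  proof
    show "big g (perm_act p x) \<subseteq> (`) p ` big g x"
      using mem e2 by (metis image_eqI subsetI)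
    show "(`) p ` big g x \<subseteq> big g (perm_act p x)"
      using mem e1 by auto
  qed
qed

lemma chamber_facts:
  assumes C: "C \<in> chambers g" and x: "x \<in> C"
  shows "weight_datum g x" "\<And>y. y \<in> C \<Longrightarrow> big g y = big g x"
proof -
  obtain a where C': "C = chamber g a" using C by (auto simp: chambers_def)
  show "weight_datum g x" using x C' by (simp add: chamber_def)
  fix y assume "y \<in> C"
  then show "big g y = big g x" using x C' by (auto simp: chamber_def big_def)
qed

lemma perm_act_inv:
  assumes p: "p permutes (UNIV::'n::finite set)"
  shows "perm_act (inv p) (perm_act p x) = x"
  by (simp add: perm_act_def vec_eq_iff permutes_inv_inv[OF p] permutes_inverses[OF p])

lemma perm_act_id: "perm_act id x = x"
  by (simp add: perm_act_def vec_eq_iff)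

lemma card_big_perm:
  fixes x :: "real^('n::finite)"
  assumes p: "p permutes (UNIV::'n set)"
  shows "card (big g (perm_act p x)) = card (big g x)"
proof -
  have "inj ((`) p)" using permutes_inj[OF p] by (simp add: inj_def inj_image_eq_iff)
  then show ?thesis unfolding big_perm[OF p] by (simp add: card_image inj_on_subset)
qed

theorem mainTheorem5:
  fixes g :: nat and C1 C2 :: "(real^('n::finite)) set" and A B :: "real^'n"
  assumes "C1 \<in> chambers g" and "C2 \<in> chambers g"
    and "A \<in> C1" and "B \<in> C2"
    and "class_le g (sym_class C1) (sym_class C2)"
  shows "\<exists>Fo Fm. full_embedding g A B Fo Fm \<and>
           (sym_class C1 = sym_class C2 \<longrightarrow> cat_isomorphism g A B Fo Fm)"
proof -
  note ch1 = chamber_facts[OF assms(1) assms(3)]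
  note ch2 = chamber_facts[OF assms(2) assms(4)]
  obtain \<sigma> \<tau> where s: "\<sigma> permutes (UNIV::'n set)" and t: "\<tau> permutes (UNIV::'n set)"
    and le: "chamber_le g (perm_act \<sigma> ` C1) (perm_act \<tau> ` C2)"
    using assms(5) unfolding class_le_def sym_class_def by blast
  have sub1: "big g (perm_act \<sigma> A) \<subseteq> big g (perm_act \<tau> B)"
  proof
    fix S assume S: "S \<in> big g (perm_act \<sigma> A)"
    have "\<forall>a\<in>perm_act \<sigma> ` C1. wsum S a > 1"
    proof
      fix a assume "a \<in> perm_act \<sigma> ` C1"
      then obtain a1 where a1: "a1 \<in> C1" "a = perm_act \<sigma> a1" by blast
      have "big g a = big g (perm_act \<sigma> A)" using a1 ch1(2)[OF a1(1)] by (simp add: big_perm[OF s])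
      then have "S \<in> big g a" using S by simp
      then show "wsum S a > 1" by (simp add: big_def)
    qed
    moreover have "is_wall g S" using S by (simp add: big_def)
    ultimately have "\<forall>b\<in>perm_act \<tau> ` C2. wsum S b > 1" using le unfolding chamber_le_def by blast
    then have "wsum S (perm_act \<tau> B) > 1" using assms(4) by blast
    then show "S \<in> big g (perm_act \<tau> B)" using S by (simp add: big_def)
  qed
  define c where "c = perm_act (inv \<tau>) (perm_act \<sigma> A)"
  have it: "inv \<tau> permutes (UNIV::'n set)" using permutes_inv[OF t] .
  have is': "inv \<sigma> permutes (UNIV::'n set)" using permutes_inv[OF s] .
  have wdc: "weight_datum g c" unfolding c_def by (intro wd_perm[OF it] wd_perm[OF s] ch1(1))
  have mono: "big g c \<subseteq> big g B"
  proof -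
    have "big g c = (`) (inv \<tau>) ` big g (perm_act \<sigma> A)" unfolding c_def by (rule big_perm[OF it])
    also have "\<dots> \<subseteq> (`) (inv \<tau>) ` big g (perm_act \<tau> B)" using sub1 by auto
    also have "\<dots> = big g (perm_act (inv \<tau>) (perm_act \<tau> B))" by (rule big_perm[OF it, symmetric])
    also have "\<dots> = big g B" by (simp add: perm_act_inv[OF t])
    finally show ?thesis .
  qed
  define q where "q = inv \<sigma> \<circ> \<tau>"
  define q' where "q' = inv \<tau> \<circ> \<sigma>"
  have Rq: "stable_graph g c (relab q G) \<longleftrightarrow> stable_graph g A G" for G
  proof -
    have "relab q G = relab (inv (inv \<tau>)) (relab (inv \<sigma>) G)"
      by (simp add: relab_relab q_def permutes_inv_inv[OF t])
    then have "stable_graph g c (relab q G) \<longleftrightarrow> stable_graph g (perm_act \<sigma> A) (relab (inv \<sigma>) G)"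
      unfolding c_def using stable_relab[OF it] by simp
    also have "\<dots> \<longleftrightarrow> stable_graph g A G" by (rule stable_relab[OF s])
    finally show ?thesis .
  qed
  have qq': "q (q' x) = x" for x unfolding q_def q'_def
    by (simp add: permutes_inverses[OF s] permutes_inverses[OF t])
  have q'q: "q' (q x) = x" for x unfolding q_def q'_def
    by (simp add: permutes_inverses[OF s] permutes_inverses[OF t])
  note gen = generic_embedding[OF ch1(1) ch2(1) wdc Rq qq' q'q mono]
  have eqcase: "big g B \<subseteq> big g c" if eq: "sym_class C1 = sym_class C2"
  proof -
    have "perm_act id ` C1 = C1" by (simp add: perm_act_id)
    then have "C1 \<in> sym_class C1" unfolding sym_class_def using permutes_id by blast
    then have "C1 \<in> sym_class C2" using eq by simp
    then have "\<exists>\<pi>. C1 = perm_act \<pi> ` C2 \<and> \<pi> permutes (UNIV::'n set)"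
      by (simp add: sym_class_def)
    then obtain \<pi> where p: "\<pi> permutes (UNIV::'n set)" and C1e: "C1 = perm_act \<pi> ` C2"
      by (elim exE conjE)
    have "A \<in> perm_act \<pi> ` C2" using C1e assms(3) by simp
    then obtain B0 where B0: "B0 \<in> C2" "A = perm_act \<pi> B0" by (rule imageE) simp
    have "card (big g A) = card (big g (perm_act \<pi> B0))" using B0(2) by simp
    also have "\<dots> = card (big g B0)" by (rule card_big_perm[OF p])
    also have "\<dots> = card (big g B)" using ch2(2)[OF B0(1)] by simp
    finally have cA: "card (big g A) = card (big g B)" .
    have "card (big g c) = card (big g (perm_act \<sigma> A))" unfolding c_def by (rule card_big_perm[OF it])
    also have "\<dots> = card (big g A)" by (rule card_big_perm[OF s])
    finally have "card (big g c) = card (big g B)" using cA by simp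
    moreover have "finite (big g B)" by (rule finite_subset[OF subset_UNIV]) simp
    ultimately have "big g c = big g B" using mono card_subset_eq by blast
    then show ?thesis by simp
  qed
  show ?thesis using gen eqcase by blast
qed

end
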